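(* Let $\mathscr{a}\in\mathbb{R}$, $\mathscr{b}\in(\mathscr{a},\infty)$, for $\theta=(\theta_1,\theta_2,\theta_3,\theta_4)\in\mathbb{R}^4$ and $x\in\mathbb{R}$ let $\mathscr{N}^\theta(x)=\theta_3\max\{\theta_1x+\theta_2,0\}+\theta_4$ and $I^\theta=\{x\in[\mathscr{a},\mathscr{b}]\colon\theta_1x+\theta_2>0\}$, let $\lambda$ be the Lebesgue–Borel measure on $\mathbb{R}$, and let $(\theta_n)_{n\in\mathbb{N}}\subseteq\mathbb{R}^4$, $\theta_n=(\theta_{n,1},\theta_{n,2},\theta_{n,3},\theta_{n,4})$, and $h\in C([\mathscr{a},\mathscr{b}],\mathbb{R})$ satisfy $\lim_{n\to\infty}\sup_{x\in[\mathscr{a},\mathscr{b}]}|\mathscr{N}^{\theta_n}(x)-h(x)|=0$, where $h$ is not constant. Then there exists $\vartheta=(\vartheta_1,\dots,\vartheta_4)\in\mathbb{R}^4$ such that $\mathscr{N}^\vartheta|_{[\mathscr{a},\mathscr{b}]}=h$, $\lim_{n\to\infty}|\theta_{n,1}\theta_{n,3}-\vartheta_1\vartheta_3|=0$, and $\lim_{n\to\infty}\lambda(I^{\theta_n}\,\Delta\,I^\vartheta)=0$.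
   Context: $A\,\Delta\,B$ denotes the symmetric difference of sets. *)

theory Defs
  imports "HOL-Analysis.Analysis"
begin

definition ann :: "real^4 \<Rightarrow> real \<Rightarrow> real" where
  "ann \<theta> x = \<theta>$3 * max (\<theta>$1 * x + \<theta>$2) 0 + \<theta>$4"

definition active_set :: "real \<Rightarrow> real \<Rightarrow> real^4 \<Rightarrow> real set" where
  "active_set a b \<theta> = {x \<in> {a..b}. \<theta>$1 * x + \<theta>$2 > 0}"

definition symdiff :: "'a set \<Rightarrow> 'a set \<Rightarrow> 'a set" where
  "symdiff A B = (A - B) \<union> (B - A)"

end

theory Submission
  imports Defs
begin

definition mu :: "real \<Rightarrow> real \<Rightarrow> real \<Rightarrow> real \<Rightarrow> real" where
  "mu a b p x = (if p \<le> b - a then max (x - (b - p)) 0 else min (x - a) (2*(b-a) - p))"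
definition ell :: "real \<Rightarrow> real \<Rightarrow> real \<Rightarrow> real" where
  "ell a b p = (if p \<le> b - a then p else 2*(b-a) - p)"
definition rtype :: "real \<Rightarrow> real \<Rightarrow> real \<Rightarrow> real set \<Rightarrow> bool" where
  "rtype a b t I = (\<forall>x\<in>{a..b}. (t < x \<longrightarrow> x \<in> I) \<and> (x < t \<longrightarrow> x \<notin> I))"
definition ltype :: "real \<Rightarrow> real \<Rightarrow> real \<Rightarrow> real set \<Rightarrow> bool" where
  "ltype a b v I = (\<forall>x\<in>{a..b}. (x < v \<longrightarrow> x \<in> I) \<and> (v < x \<longrightarrow> x \<notin> I))"

lemma mu_b: "0 \<le> p \<Longrightarrow> p \<le> 2*(b-a) \<Longrightarrow> mu a b p b = ell a b p"
  unfolding mu_def ell_def by auto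

lemma mu_bounds: "x \<in> {a..b} \<Longrightarrow> 0 \<le> p \<Longrightarrow> p \<le> 2*(b-a) \<Longrightarrow> 0 \<le> mu a b p x \<and> mu a b p x \<le> ell a b p"
  unfolding mu_def ell_def by auto

lemma mu_lip: "x \<in> {a..b} \<Longrightarrow> \<bar>mu a b p x - mu a b q x\<bar> \<le> \<bar>p - q\<bar>"
  unfolding mu_def by (auto split: if_splits)

lemma ell_lip: "\<bar>ell a b p - ell a b q\<bar> \<le> \<bar>p - q\<bar>"
  unfolding ell_def by (auto split: if_splits)

lemma vec4: "\<exists>v::real^4. v$1 = x1 \<and> v$2 = x2 \<and> v$3 = x3 \<and> v$4 = x4"
  by (rule exI[of _ "\<chi> i. if i = 1 then x1 else if i = 2 then x2 else if i = 3 then x3 else x4"]) simp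


lemma canon:
  fixes \<theta> :: "real^4"
  assumes ab: "a < b"
  shows "\<exists>p. 0 \<le> p \<and> p \<le> 2*(b-a) \<and> (\<forall>x\<in>{a..b}. ann \<theta> x = ann \<theta> a + \<theta>$1*\<theta>$3 * mu a b p x)
     \<and> ((p \<le> b-a \<and> rtype a b (b-p) (active_set a b \<theta>)) \<or> (b-a \<le> p \<and> ltype a b (2*b-a-p) (active_set a b \<theta>)))"
proof -
  consider "\<theta>$1 > 0" | "\<theta>$1 < 0" | "\<theta>$1 = 0 \<and> \<theta>$2 > 0" | "\<theta>$1 = 0 \<and> \<theta>$2 \<le> 0" by linarith
  then show ?thesis
  proof cases
    case 1
    define t where "t = - \<theta>$2 / \<theta>$1"
    define tc where "tc = max a (min b t)"
    have lin: "\<theta>$1 * x + \<theta>$2 = \<theta>$1 * (x - t)" for x using 1 by (simp add: t_def field_simps)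
    have mx: "max (\<theta>$1 * x + \<theta>$2) 0 = \<theta>$1 * max (x - t) 0" for x
      using 1 by (simp add: lin max_def mult_le_0_iff)
    show ?thesis
    proof (intro exI[of _ "b - tc"] conjI ballI disjI1)
      show "0 \<le> b - tc" "b - tc \<le> 2*(b-a)" "b - tc \<le> b - a" using ab by (auto simp: tc_def)
      fix x assume x: "x \<in> {a..b}"
      have "max (x - t) 0 - max (a - t) 0 = max (x - tc) 0" using x ab by (auto simp: tc_def max_def)
      moreover have "mu a b (b - tc) x = max (x - tc) 0" using ab by (auto simp: mu_def tc_def)
      ultimately show "ann \<theta> x = ann \<theta> a + \<theta>$1*\<theta>$3 * mu a b (b - tc) x"
        unfolding ann_def mx by (simp add: algebra_simps)
    next
      show "rtype a b (b - (b - tc)) (active_set a b \<theta>)"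
        unfolding rtype_def active_set_def using 1 ab by (auto simp: lin tc_def zero_less_mult_iff)
    qed
  next
    case 2
    define t where "t = - \<theta>$2 / \<theta>$1"
    define vc where "vc = max a (min b t)"
    have lin: "\<theta>$1 * x + \<theta>$2 = (- \<theta>$1) * (t - x)" for x using 2 by (simp add: t_def field_simps)
    have mx: "max (\<theta>$1 * x + \<theta>$2) 0 = (- \<theta>$1) * max (t - x) 0" for x
      unfolding lin max_def using 2 by (auto simp: mult_le_0_iff zero_le_mult_iff)
    show ?thesis
    proof (intro exI[of _ "2*b - a - vc"] conjI ballI disjI2)
      show "0 \<le> 2*b - a - vc" "2*b - a - vc \<le> 2*(b-a)" "b - a \<le> 2*b - a - vc" using ab by (auto simp: vc_def)
      fix x assume x: "x \<in> {a..b}"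
      have "max (t - a) 0 - max (t - x) 0 = min (x - a) (vc - a)" using x ab by (auto simp: vc_def max_def min_def)
      moreover have "mu a b (2*b - a - vc) x = min (x - a) (vc - a)" using ab x by (auto simp: mu_def vc_def)
      ultimately show "ann \<theta> x = ann \<theta> a + \<theta>$1*\<theta>$3 * mu a b (2*b - a - vc) x"
        unfolding ann_def mx by (simp add: algebra_simps)
    next
      show "ltype a b (2 * b - a - (2 * b - a - vc)) (active_set a b \<theta>)"
        unfolding ltype_def active_set_def using 2 ab by (auto simp: lin vc_def zero_less_mult_iff mult_less_0_iff)
    qed
  next
    case 3
    show ?thesis
      apply (intro exI[of _ "b - a"] conjI ballI disjI1)
      using 3 ab by (auto simp: ann_def rtype_def active_set_def)
  next
    case 4
    show ?thesis
      apply (intro exI[of _ "0"] conjI ballI disjI1)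
      using 4 ab by (auto simp: ann_def rtype_def active_set_def)
  qed
qed


lemma int_lin: fixes c d :: real assumes "c \<le> d"
  shows "((\<lambda>x. x - c) has_integral ((d-c)^2/2)) {c..d}"
proof -
  have "((\<lambda>x. x - c) has_integral ((\<lambda>x. (x-c)^2/2) d - (\<lambda>x. (x-c)^2/2) c)) {c..d}"
  proof (rule fundamental_theorem_of_calculus[OF assms])
    fix x assume "x \<in> {c..d}"
    have "((\<lambda>x. (x-c)^2/2) has_real_derivative (x - c)) (at x within {c..d})"
      by (auto intro!: derivative_eq_intros)
    then show "((\<lambda>x. (x-c)^2/2) has_vector_derivative (x - c)) (at x within {c..d})"
      by (simp add: has_real_derivative_iff_has_vector_derivative)
  qed
  then show ?thesis by simp
qed

lemma mu_integral:
  assumes ab: "a < b" and p: "0 \<le> p" "p \<le> 2*(b-a)"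
  shows "(mu a b p has_integral (p * ell a b p / 2)) {a..b}"
proof (cases "p \<le> b - a")
  case True
  define c where "c = b - p"
  have c: "a \<le> c" "c \<le> b" using True p by (auto simp: c_def)
  have i1: "(mu a b p has_integral 0) {a..c}"
    by (rule has_integral_eq[OF _ has_integral_0]) (auto simp: mu_def True c_def)
  have i2: "(mu a b p has_integral ((b-c)^2/2)) {c..b}"
    by (rule has_integral_eq[OF _ int_lin[OF c(2)]]) (auto simp: mu_def True c_def)
  have "(mu a b p has_integral (0 + (b-c)^2/2)) {a..b}"
    by (rule has_integral_combine[OF c i1 i2])
  then show ?thesis using True by (simp add: ell_def c_def power2_eq_square)
next
  case False
  define L where "L = 2*(b-a) - p"
  define c where "c = a + L"
  have c: "a \<le> c" "c \<le> b" using False p by (auto simp: c_def L_def)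
  have i1: "(mu a b p has_integral ((c-a)^2/2)) {a..c}"
    by (rule has_integral_eq[OF _ int_lin[OF c(1)]]) (auto simp: mu_def False c_def L_def)
  have k: "((\<lambda>x. L) has_integral (L*(b-c))) {c..b}"
    using has_integral_const_real[of L c b] c by (simp add: mult.commute)
  have i2: "(mu a b p has_integral (L*(b-c))) {c..b}"
    by (rule has_integral_eq[OF _ k]) (auto simp: mu_def False c_def L_def)
  have "(mu a b p has_integral ((c-a)^2/2 + L*(b-c))) {a..b}"
    by (rule has_integral_combine[OF c i1 i2])
  moreover have "(c-a)^2/2 + L*(b-c) = p * ell a b p / 2"
    using False by (simp add: ell_def c_def L_def power2_eq_square field_simps)
  ultimately show ?thesis by simp
qed


lemma sym_rr:
  assumes "rtype a b t I" "rtype a b t' J" "I \<subseteq> {a..b}" "J \<subseteq> {a..b}"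
  shows "emeasure lborel (symdiff I J) \<le> ennreal \<bar>t - t'\<bar>"
proof -
  have "symdiff I J \<subseteq> {min t t'..max t t'}"
  proof
    fix x assume x: "x \<in> symdiff I J"
    then have xab: "x \<in> {a..b}" using assms(3,4) by (auto simp: symdiff_def)
    show "x \<in> {min t t'..max t t'}"
    proof (rule ccontr)
      assume "x \<notin> {min t t'..max t t'}"
      then have "x < min t t' \<or> max t t' < x" by auto
      then show False using x xab assms(1,2) unfolding rtype_def symdiff_def by auto
    qed
  qed
  then have "emeasure lborel (symdiff I J) \<le> emeasure lborel {min t t'..max t t'}"
    by (intro emeasure_mono) auto
  also have "\<dots> = ennreal \<bar>t - t'\<bar>" by (simp add: abs_real_def max_def min_def)
  finally show ?thesis .
qed

lemma sym_ll:
  assumes "ltype a b t I" "ltype a b t' J" "I \<subseteq> {a..b}" "J \<subseteq> {a..b}"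
  shows "emeasure lborel (symdiff I J) \<le> ennreal \<bar>t - t'\<bar>"
proof -
  have "symdiff I J \<subseteq> {min t t'..max t t'}"
  proof
    fix x assume x: "x \<in> symdiff I J"
    then have xab: "x \<in> {a..b}" using assms(3,4) by (auto simp: symdiff_def)
    show "x \<in> {min t t'..max t t'}"
    proof (rule ccontr)
      assume "x \<notin> {min t t'..max t t'}"
      then have "x < min t t' \<or> max t t' < x" by auto
      then show False using x xab assms(1,2) unfolding ltype_def symdiff_def by auto
    qed
  qed
  then have "emeasure lborel (symdiff I J) \<le> emeasure lborel {min t t'..max t t'}"
    by (intro emeasure_mono) auto
  also have "\<dots> = ennreal \<bar>t - t'\<bar>" by (simp add: abs_real_def max_def min_def)
  finally show ?thesis .
qed

lemma sym_fr:
  assumes "rtype a b t I" "I \<subseteq> {a..b}"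
  shows "emeasure lborel (symdiff I {a..b}) \<le> ennreal (t - a)"
proof -
  have "symdiff I {a..b} \<subseteq> {a..t}"
    using assms unfolding rtype_def symdiff_def by force
  then have "emeasure lborel (symdiff I {a..b}) \<le> emeasure lborel {a..t}"
    by (intro emeasure_mono) auto
  also have "\<dots> \<le> ennreal (t - a)" by (simp add: emeasure_lborel_Icc_eq)
  finally show ?thesis .
qed

lemma sym_fl:
  assumes "ltype a b t I" "I \<subseteq> {a..b}"
  shows "emeasure lborel (symdiff I {a..b}) \<le> ennreal (b - t)"
proof -
  have "symdiff I {a..b} \<subseteq> {t..b}"
    using assms unfolding ltype_def symdiff_def by force
  then have "emeasure lborel (symdiff I {a..b}) \<le> emeasure lborel {t..b}"
    by (intro emeasure_mono) auto
  also have "\<dots> \<le> ennreal (b - t)" by (simp add: emeasure_lborel_Icc_eq)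
  finally show ?thesis .
qed


lemma lip_tendsto:
  fixes P :: "nat \<Rightarrow> real" and g :: "real \<Rightarrow> real"
  assumes "\<And>n. \<bar>g (P n) - g p\<bar> \<le> \<bar>P n - p\<bar>" "P \<longlonglongrightarrow> p"
  shows "(\<lambda>n. g (P n)) \<longlonglongrightarrow> g p"
proof -
  have "(\<lambda>n. P n - p) \<longlonglongrightarrow> 0" using assms(2) by (simp add: Lim_null[symmetric])
  then have "(\<lambda>n. \<bar>P n - p\<bar>) \<longlonglongrightarrow> 0" by (rule tendsto_rabs_zero)
  moreover have "\<forall>n. norm (g (P n) - g p) \<le> \<bar>P n - p\<bar>" using assms(1) by simp
  ultimately have "(\<lambda>n. g (P n) - g p) \<longlonglongrightarrow> 0"
    using Lim_null_comparison[OF always_eventually[of "\<lambda>n. norm (g (P n) - g p) \<le> \<bar>P n - p\<bar>"]] by blast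
  then show ?thesis by (simp add: Lim_null[of "\<lambda>n. g (P n)"])
qed

lemma cont_ann: "continuous_on S (ann \<theta>)"
  unfolding ann_def by (intro continuous_intros continuous_on_max)

lemma bnd_tendsto:
  fixes X :: "nat \<Rightarrow> real"
  assumes "\<And>n. \<bar>X n - l\<bar> \<le> c * e n" "e \<longlonglongrightarrow> 0"
  shows "X \<longlonglongrightarrow> l"
proof -
  have "(\<lambda>n. c * e n) \<longlonglongrightarrow> 0" using tendsto_mult_right_zero[OF assms(2)] by simp
  moreover have "\<forall>n. norm (X n - l) \<le> c * e n" using assms(1) by simp
  ultimately have "(\<lambda>n. X n - l) \<longlonglongrightarrow> 0"
    using Lim_null_comparison[OF always_eventually[of "\<lambda>n. norm (X n - l) \<le> c * e n"]] by blast
  then show ?thesis by (simp add: Lim_null[of X])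
qed


theorem lemma6p4:
  fixes a b :: real and \<theta> :: "nat \<Rightarrow> real^4" and h :: "real \<Rightarrow> real"
  assumes "a < b"
    and "continuous_on {a..b} h"
    and "(\<lambda>n. SUP x\<in>{a..b}. \<bar>ann (\<theta> n) x - h x\<bar>) \<longlonglongrightarrow> 0"
    and "\<exists>x\<in>{a..b}. \<exists>y\<in>{a..b}. h x \<noteq> h y"
  shows "\<exists>\<eta> :: real^4. (\<forall>x\<in>{a..b}. ann \<eta> x = h x)
           \<and> (\<lambda>n. \<bar>\<theta> n $ 1 * \<theta> n $ 3 - \<eta>$1 * \<eta>$3\<bar>) \<longlonglongrightarrow> 0
           \<and> (\<lambda>n. emeasure lborel (symdiff (active_set a b (\<theta> n)) (active_set a b \<eta>))) \<longlonglongrightarrow> 0"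
proof -
  note ab = assms(1)
  define s where "s n = \<theta> n $ 1 * \<theta> n $ 3" for n
  have "\<forall>n. \<exists>p. 0 \<le> p \<and> p \<le> 2*(b-a) \<and> (\<forall>x\<in>{a..b}. ann (\<theta> n) x = ann (\<theta> n) a + s n * mu a b p x)
     \<and> ((p \<le> b-a \<and> rtype a b (b-p) (active_set a b (\<theta> n))) \<or> (b-a \<le> p \<and> ltype a b (2*b-a-p) (active_set a b (\<theta> n))))"
    unfolding s_def using canon[OF ab] by blast
  then obtain P where P: "\<And>n. 0 \<le> P n" "\<And>n. P n \<le> 2*(b-a)"
    "\<And>n x. x \<in> {a..b} \<Longrightarrow> ann (\<theta> n) x = ann (\<theta> n) a + s n * mu a b (P n) x"
    "\<And>n. (P n \<le> b-a \<and> rtype a b (b - P n) (active_set a b (\<theta> n))) \<or> (b-a \<le> P n \<and> ltype a b (2*b-a-P n) (active_set a b (\<theta> n)))"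
    by metis
  define e where "e n = (SUP x\<in>{a..b}. \<bar>ann (\<theta> n) x - h x\<bar>)" for n
  have e0: "e \<longlonglongrightarrow> 0" unfolding e_def[abs_def] using assms(3) .
  have bound: "\<bar>ann (\<theta> n) x - h x\<bar> \<le> e n" if x: "x \<in> {a..b}" for n x
  proof -
    have "continuous_on {a..b} (\<lambda>x. \<bar>ann (\<theta> n) x - h x\<bar>)"
      by (intro continuous_intros cont_ann assms(2))
    then have "compact ((\<lambda>x. \<bar>ann (\<theta> n) x - h x\<bar>) ` {a..b})"
      by (intro compact_continuous_image) auto
    then have "bdd_above ((\<lambda>x. \<bar>ann (\<theta> n) x - h x\<bar>) ` {a..b})"
      by (intro bounded_imp_bdd_above compact_imp_bounded)
    then show ?thesis unfolding e_def using x by (rule cSUP_upper2) auto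
  qed
  define H where "H x = h x - h a" for x
  define F where "F n x = ann (\<theta> n) x - ann (\<theta> n) a" for n x
  define D where "D = H b"
  define A where "A n = s n * ell a b (P n)" for n
  have Fform: "F n x = s n * mu a b (P n) x" if "x \<in> {a..b}" for n x
    using P(3)[OF that] by (simp add: F_def)
  have FH: "\<bar>F n x - H x\<bar> \<le> 2 * e n" if x: "x \<in> {a..b}" for n x
  proof -
    have "\<bar>ann (\<theta> n) x - h x\<bar> \<le> e n" "\<bar>ann (\<theta> n) a - h a\<bar> \<le> e n"
      using bound[OF x, of n] bound[of a n] ab by auto
    then show ?thesis unfolding F_def H_def by linarith
  qed
  have Fconv: "(\<lambda>n. F n x) \<longlonglongrightarrow> H x" if "x \<in> {a..b}" for x
    using FH[OF that] e0 by (rule bnd_tendsto)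
  have bab: "b \<in> {a..b}" "a \<in> {a..b}" using ab by auto
  have AF: "A n = F n b" for n using Fform[OF bab(1)] mu_b[OF P(1,2)] by (simp add: A_def)
  have Aconv: "A \<longlonglongrightarrow> D" unfolding AF D_def by (rule Fconv[OF bab(1)])
  have nonneg: "0 \<le> H y * (D - H y)" if y: "y \<in> {a..b}" for y
  proof -
    have "(\<lambda>n. F n y * (A n - F n y)) \<longlonglongrightarrow> H y * (D - H y)"
      by (intro tendsto_intros Fconv y Aconv)
    moreover have "0 \<le> F n y * (A n - F n y)" for n
    proof -
      have "F n y * (A n - F n y) = (s n * s n) * (mu a b (P n) y * (ell a b (P n) - mu a b (P n) y))"
        by (simp add: Fform[OF y] A_def algebra_simps)
      also have "\<dots> \<ge> 0" using mu_bounds[OF y P(1,2)] by simp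
      finally show ?thesis .
    qed
    ultimately show ?thesis by (intro LIMSEQ_le_const) auto
  qed
  have Dne: "D \<noteq> 0"
  proof
    assume D0: "D = 0"
    have "h y = h a" if "y \<in> {a..b}" for y
    proof -
      have "H y * H y \<le> 0" using nonneg[OF that] D0 by simp
      then have "H y = 0" using zero_le_square[of "H y"] by simp
      then show ?thesis by (simp add: H_def)
    qed
    then show False using assms(4) by metis
  qed
  have Fint: "(F n has_integral (A n * P n / 2)) {a..b}" for n
  proof -
    have "((\<lambda>x. s n * mu a b (P n) x) has_integral (s n * (P n * ell a b (P n) / 2))) {a..b}"
      by (rule has_integral_mult_right[OF mu_integral[OF ab P(1,2)]])
    moreover have eq: "s n * (P n * ell a b (P n) / 2) = A n * P n / 2" by (simp add: A_def)
    ultimately have "((\<lambda>x. s n * mu a b (P n) x) has_integral (A n * P n / 2)) {a..b}" by (simp only: eq)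
    then show ?thesis by (rule has_integral_eq[rotated]) (simp add: Fform)
  qed
  have Hcont: "continuous_on {a..b} H" unfolding H_def by (intro continuous_intros assms(2))
  define QH where "QH = integral {a..b} H"
  have Hint: "(H has_integral QH) {a..b}"
    using integrable_continuous_interval[OF Hcont] by (simp add: QH_def integrable_integral)
  have e_nn: "0 \<le> e n" for n using bound[OF bab(2), of n] by linarith
  have Qbound: "\<bar>A n * P n / 2 - QH\<bar> \<le> (2*(b-a)) * e n" for n
  proof -
    have i: "((\<lambda>x. F n x - H x) has_integral (A n * P n / 2 - QH)) (cbox a b)"
      using has_integral_diff[OF Fint Hint] by simp
    have "norm (A n * P n / 2 - QH) \<le> 2 * e n * (b - a)"
      using has_integral_bound[OF _ i, of "2 * e n"] e_nn FH ab by simp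
    then show ?thesis using ab by (simp add: algebra_simps)
  qed
  have APconv: "(\<lambda>n. A n * P n / 2) \<longlonglongrightarrow> QH" using Qbound e0 by (rule bnd_tendsto)
  define pstar where "pstar = QH * 2 / D"
  have Pconv: "P \<longlonglongrightarrow> pstar"
  proof -
    have "(\<lambda>n. (A n * P n / 2) * 2 / A n) \<longlonglongrightarrow> QH * 2 / D"
      by (intro tendsto_intros APconv Aconv Dne)
    moreover have "eventually (\<lambda>n. (A n * P n / 2) * 2 / A n = P n) sequentially"
      using tendsto_imp_eventually_ne[OF Aconv Dne] by eventually_elim simp
    ultimately show ?thesis unfolding pstar_def using tendsto_cong by fastforce
  qed
  have ps0: "0 \<le> pstar" using Pconv P(1) by (intro LIMSEQ_le_const) auto
  have ps1: "pstar \<le> 2*(b-a)" using Pconv P(2) by (intro LIMSEQ_le_const2) auto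
  define r where "r y = H y / D" for y
  have r01: "0 \<le> r y \<and> r y \<le> 1" if y: "y \<in> {a..b}" for y
  proof -
    have "r y * (1 - r y) = H y * (D - H y) / (D * D)" using Dne by (simp add: r_def field_simps)
    also have "\<dots> \<ge> 0" using nonneg[OF y] by simp
    finally have "0 \<le> r y * (1 - r y)" .
    then show ?thesis by (auto simp: zero_le_mult_iff)
  qed
  have rint: "(r has_integral (pstar / 2)) {a..b}"
  proof -
    have "((\<lambda>y. inverse D * H y) has_integral (inverse D * QH)) {a..b}"
      by (rule has_integral_mult_right[OF Hint])
    moreover have eq: "inverse D * QH = pstar / 2" using Dne by (simp add: pstar_def field_simps)
    moreover have r_eq: "r = (\<lambda>y. inverse D * H y)" by (auto simp: r_def[abs_def] field_simps)
    ultimately show ?thesis by (simp only: r_eq eq)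
  qed
  have rcont: "continuous_on {a..b} r" unfolding r_def using Dne by (intro continuous_intros Hcont) auto
  have rb: "r b = 1" using Dne by (simp add: r_def D_def)
  have ra: "r a = 0" by (simp add: r_def H_def)
  have boxne: "box a b \<noteq> {}" using ab by simp
  have ps0': "pstar \<noteq> 0"
  proof
    assume "pstar = 0"
    then have i0: "(r has_integral 0) (cbox a b)" using rint by simp
    have "r b = 0"
      by (rule has_integral_0_cbox_imp_0[OF _ _ i0 boxne]) (use rcont r01 ab in auto)
    then show False using rb by simp
  qed
  have ps1': "pstar \<noteq> 2*(b-a)"
  proof
    assume ps: "pstar = 2*(b-a)"
    have "((\<lambda>y. 1 - r y) has_integral ((b - a) - pstar / 2)) {a..b}"
      using has_integral_diff[OF has_integral_const_real[of 1 a b] rint] ab by simp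
    moreover have "(b - a) - pstar / 2 = 0" using ps by simp
    ultimately have i0: "((\<lambda>y. 1 - r y) has_integral 0) (cbox a b)" by simp
    have "1 - r a = 0"
      by (rule has_integral_0_cbox_imp_0[OF _ _ i0 boxne]) (use rcont r01 ab in \<open>auto intro!: continuous_intros\<close>)
    then show False using ra by simp
  qed
  have ellp: "ell a b pstar > 0" using ps0 ps1 ps0' ps1' ab by (auto simp: ell_def)
  have ellconv: "(\<lambda>n. ell a b (P n)) \<longlonglongrightarrow> ell a b pstar"
    by (rule lip_tendsto[OF ell_lip Pconv])
  have muconv: "(\<lambda>n. mu a b (P n) x) \<longlonglongrightarrow> mu a b pstar x" if "x \<in> {a..b}" for x
    by (rule lip_tendsto[of "\<lambda>p. mu a b p x", OF mu_lip[OF that] Pconv])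
  define S where "S = D / ell a b pstar"
  have sconv: "s \<longlonglongrightarrow> S"
  proof -
    have "(\<lambda>n. A n / ell a b (P n)) \<longlonglongrightarrow> S"
      unfolding S_def using ellp by (intro tendsto_intros Aconv ellconv) auto
    moreover have ev: "eventually (\<lambda>n. ell a b (P n) \<noteq> 0) sequentially"
      using tendsto_imp_eventually_ne[OF ellconv, of 0] ellp by simp
    moreover have "eventually (\<lambda>n. A n / ell a b (P n) = s n) sequentially"
      using ev by eventually_elim (auto simp: A_def)
    ultimately show ?thesis using tendsto_cong by fastforce
  qed
  have hform: "h x = h a + S * mu a b pstar x" if x: "x \<in> {a..b}" for x
  proof -
    have "(\<lambda>n. F n x) \<longlonglongrightarrow> S * mu a b pstar x"
      unfolding Fform[OF x] by (intro tendsto_intros sconv muconv x)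
    then have "H x = S * mu a b pstar x" using Fconv[OF x] LIMSEQ_unique by blast
    then show ?thesis by (simp add: H_def)
  qed
  have sabs: "(\<lambda>n. \<bar>s n - S\<bar>) \<longlonglongrightarrow> 0"
    using sconv by (intro tendsto_rabs_zero) (simp add: Lim_null[symmetric])
  have Pabs: "(\<lambda>n. ennreal \<bar>P n - pstar\<bar>) \<longlonglongrightarrow> 0"
  proof -
    have "(\<lambda>n. \<bar>P n - pstar\<bar>) \<longlonglongrightarrow> 0"
      using Pconv by (intro tendsto_rabs_zero) (simp add: Lim_null[symmetric])
    then show ?thesis using tendsto_ennrealI by fastforce
  qed
  have fin: "?thesis" if eta1: "\<forall>x\<in>{a..b}. ann \<eta> x = h x" and eta2: "\<eta>$1 * \<eta>$3 = S"
    and eta3: "eventually (\<lambda>n. emeasure lborel (symdiff (active_set a b (\<theta> n)) (active_set a b \<eta>)) \<le> ennreal \<bar>P n - pstar\<bar>) sequentially"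
    for \<eta>
  proof (intro exI[of _ \<eta>] conjI eta1)
    show "(\<lambda>n. \<bar>\<theta> n $ 1 * \<theta> n $ 3 - \<eta>$1 * \<eta>$3\<bar>) \<longlonglongrightarrow> 0"
      using sabs by (simp add: eta2 s_def)
    show "(\<lambda>n. emeasure lborel (symdiff (active_set a b (\<theta> n)) (active_set a b \<eta>))) \<longlonglongrightarrow> 0"
      by (rule tendsto_sandwich[OF _ eta3 tendsto_const Pabs]) simp
  qed
  have actsub: "active_set a b \<eta> \<subseteq> {a..b}" for \<eta> by (auto simp: active_set_def)
  consider "pstar < b - a" | "pstar = b - a" | "b - a < pstar" by linarith
  then show ?thesis
  proof cases
    case 1
    define t where "t = b - pstar"
    obtain \<eta> :: "real^4" where \<eta>: "\<eta>$1 = 1" "\<eta>$2 = -t" "\<eta>$3 = S" "\<eta>$4 = h a"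
      using vec4 by blast
    show ?thesis
    proof (rule fin[of \<eta>])
      show "\<forall>x\<in>{a..b}. ann \<eta> x = h x"
      proof
        fix x assume x: "x \<in> {a..b}"
        have "ann \<eta> x = S * max (x - t) 0 + h a" unfolding ann_def \<eta> by simp
        also have "max (x - t) 0 = mu a b pstar x" using 1 unfolding mu_def t_def by simp
        also have "S * mu a b pstar x + h a = h x" using hform[OF x] by simp
        finally show "ann \<eta> x = h x" .
      qed
      show "\<eta>$1*\<eta>$3 = S" by (simp add: \<eta>)
      have rt: "rtype a b t (active_set a b \<eta>)" unfolding rtype_def active_set_def \<eta> by simp
      have "eventually (\<lambda>n. P n < b - a) sequentially" using Pconv 1 by (rule order_tendstoD)
      then show "eventually (\<lambda>n. emeasure lborel (symdiff (active_set a b (\<theta> n)) (active_set a b \<eta>)) \<le> ennreal \<bar>P n - pstar\<bar>) sequentially"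
      proof eventually_elim
        case (elim n)
        then have "rtype a b (b - P n) (active_set a b (\<theta> n))" using P(4)[of n] by auto
        from sym_rr[OF this rt actsub actsub] show ?case by (simp add: t_def abs_minus_commute)
      qed
    qed
  next
    case 2
    obtain \<eta> :: "real^4" where \<eta>: "\<eta>$1 = 1" "\<eta>$2 = 1 - a" "\<eta>$3 = S" "\<eta>$4 = h a - S"
      using vec4 by blast
    have act: "active_set a b \<eta> = {a..b}" unfolding active_set_def \<eta> by auto
    show ?thesis
    proof (rule fin[of \<eta>])
      show "\<forall>x\<in>{a..b}. ann \<eta> x = h x"
      proof
        fix x assume x: "x \<in> {a..b}"
        have mx: "max (x + (1 - a)) 0 = x + (1 - a)" using x by simp
        have "ann \<eta> x = S * max (x + (1 - a)) 0 + (h a - S)" unfolding ann_def \<eta> by simp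
        also have "\<dots> = S * (x - a) + h a" unfolding mx by (simp add: algebra_simps)
        also have "mu a b pstar x = x - a" using 2 x unfolding mu_def by simp
        then have "S * (x - a) + h a = h x" using hform[OF x] by simp
        finally show "ann \<eta> x = h x" .
      qed
      show "\<eta>$1*\<eta>$3 = S" by (simp add: \<eta>)
      show "eventually (\<lambda>n. emeasure lborel (symdiff (active_set a b (\<theta> n)) (active_set a b \<eta>)) \<le> ennreal \<bar>P n - pstar\<bar>) sequentially"
      proof (rule always_eventually, rule allI)
        fix n
        from P(4)[of n] show "emeasure lborel (symdiff (active_set a b (\<theta> n)) (active_set a b \<eta>)) \<le> ennreal \<bar>P n - pstar\<bar>"
        proof
          assume h1: "P n \<le> b - a \<and> rtype a b (b - P n) (active_set a b (\<theta> n))"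
          have "emeasure lborel (symdiff (active_set a b (\<theta> n)) {a..b}) \<le> ennreal (b - P n - a)"
            using sym_fr[OF conjunct2[OF h1] actsub] .
          also have "\<dots> = ennreal \<bar>P n - pstar\<bar>" using h1 2 by (simp add: abs_real_def)
          finally show ?thesis by (simp add: act)
        next
          assume h1: "b - a \<le> P n \<and> ltype a b (2*b - a - P n) (active_set a b (\<theta> n))"
          have "emeasure lborel (symdiff (active_set a b (\<theta> n)) {a..b}) \<le> ennreal (b - (2*b - a - P n))"
            using sym_fl[OF conjunct2[OF h1] actsub] .
          also have "\<dots> = ennreal \<bar>P n - pstar\<bar>" using h1 2 by (simp add: abs_real_def)
          finally show ?thesis by (simp add: act)
        qed
      qed
    qed
  next
    case 3
    define v where "v = 2*b - a - pstar"
    obtain \<eta> :: "real^4" where \<eta>: "\<eta>$1 = -1" "\<eta>$2 = v" "\<eta>$3 = -S" "\<eta>$4 = h a + S * (v - a)"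
      using vec4 by blast
    show ?thesis
    proof (rule fin[of \<eta>])
      show "\<forall>x\<in>{a..b}. ann \<eta> x = h x"
      proof
        fix x assume x: "x \<in> {a..b}"
        have m: "mu a b pstar x = min (x - a) (v - a)" using 3 by (simp add: mu_def v_def)
        have mm: "max (- x + v) 0 = (v - a) - min (x - a) (v - a)"
          by (cases "x \<le> v") (auto simp: max_def min_def)
        have "ann \<eta> x = - S * max (- x + v) 0 + (h a + S * (v - a))" unfolding ann_def \<eta> by simp
        also have "\<dots> = h a + S * mu a b pstar x" unfolding mm m by (simp add: algebra_simps)
        also have "\<dots> = h x" using hform[OF x] by simp
        finally show "ann \<eta> x = h x" .
      qed
      show "\<eta>$1*\<eta>$3 = S" by (simp add: \<eta>)
      have lt: "ltype a b v (active_set a b \<eta>)" unfolding ltype_def active_set_def \<eta> by simp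
      have "eventually (\<lambda>n. b - a < P n) sequentially" using Pconv 3 by (rule order_tendstoD)
      then show "eventually (\<lambda>n. emeasure lborel (symdiff (active_set a b (\<theta> n)) (active_set a b \<eta>)) \<le> ennreal \<bar>P n - pstar\<bar>) sequentially"
      proof eventually_elim
        case (elim n)
        then have "ltype a b (2*b - a - P n) (active_set a b (\<theta> n))" using P(4)[of n] by auto
        from sym_ll[OF this lt actsub actsub] show ?case by (simp add: v_def abs_minus_commute)
      qed
    qed
  qed
qed

end
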